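(* Every normal distribution constraint is satisfiable.
   Context: A distribution constraint is a pair $C=\bigl((\mu^R)_{\emptyset\ne R\subseteq[n]},([t_j,T_j])_{j=1}^n\bigr)$ with $n\in\mathbb{N}$, $\mu^R\ge0$ for each nonempty $R\subseteq[n]$, and $0\le t_j\le T_j$ for each $j\in[n]$. $C$ is satisfiable if there exist reals $\mu^R_j\ge0$ ($R$ nonempty, $j\in[n]$) with $\mu^R_j=0$ for $j\notin R$, $\sum_j\mu^R_j=\mu^R$ for every $R$, and $\sum_R\mu^R_j\in[t_j,T_j]$ for every $j$. For nonempty $S\subseteq[n]$ set $m_C(S)=\sum_{\emptyset\ne R\subseteq S}\mu^R$, $M_C(S)=\sum_{R:\,R\cap S\ne\emptyset}\mu^R$, $t_C(S)=\sum_{j\in S}t_j$, $T_C(S)=\sum_{j\in S}T_j$. $C$ is normal if $t_C(S)\le M_C(S)$ and $m_C(S)\le T_C(S)$ for every nonempty $S\subseteq[n]$. *)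

theory Defs
  imports Complex_Main
begin

(* A distribution constraint C = ((mu^R)_{R nonempty subset of [n]}, ([t_j,T_j])_{j in [n]})
   is encoded by n :: nat, mu :: nat set => real (only values on nonempty R \<subseteq> {1..n} matter),
   and t, T :: nat => real (only values on {1..n} matter). [n] = {1..n}. *)

definition nonempty_subsets :: "nat \<Rightarrow> nat set set" where
  "nonempty_subsets n = {R. R \<subseteq> {1..n} \<and> R \<noteq> {}}"

definition is_dist_constraint :: "nat \<Rightarrow> (nat set \<Rightarrow> real) \<Rightarrow> (nat \<Rightarrow> real) \<Rightarrow> (nat \<Rightarrow> real) \<Rightarrow> bool" where
  "is_dist_constraint n mu t T \<longleftrightarrow>
     (\<forall>R\<in>nonempty_subsets n. mu R \<ge> 0) \<and> (\<forall>j\<in>{1..n}. 0 \<le> t j \<and> t j \<le> T j)"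

definition satisfiable :: "nat \<Rightarrow> (nat set \<Rightarrow> real) \<Rightarrow> (nat \<Rightarrow> real) \<Rightarrow> (nat \<Rightarrow> real) \<Rightarrow> bool" where
  "satisfiable n mu t T \<longleftrightarrow>
     (\<exists>x :: nat set \<Rightarrow> nat \<Rightarrow> real.
        (\<forall>R\<in>nonempty_subsets n. \<forall>j\<in>{1..n}. x R j \<ge> 0) \<and>
        (\<forall>R\<in>nonempty_subsets n. \<forall>j\<in>{1..n}. j \<notin> R \<longrightarrow> x R j = 0) \<and>
        (\<forall>R\<in>nonempty_subsets n. (\<Sum>j\<in>{1..n}. x R j) = mu R) \<and>
        (\<forall>j\<in>{1..n}. t j \<le> (\<Sum>R\<in>nonempty_subsets n. x R j) \<and>
                     (\<Sum>R\<in>nonempty_subsets n. x R j) \<le> T j))"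

definition m_C :: "nat \<Rightarrow> (nat set \<Rightarrow> real) \<Rightarrow> nat set \<Rightarrow> real" where
  "m_C n mu S = (\<Sum>R\<in>{R\<in>nonempty_subsets n. R \<subseteq> S}. mu R)"

definition M_C :: "nat \<Rightarrow> (nat set \<Rightarrow> real) \<Rightarrow> nat set \<Rightarrow> real" where
  "M_C n mu S = (\<Sum>R\<in>{R\<in>nonempty_subsets n. R \<inter> S \<noteq> {}}. mu R)"

definition t_C :: "(nat \<Rightarrow> real) \<Rightarrow> nat set \<Rightarrow> real" where
  "t_C t S = (\<Sum>j\<in>S. t j)"

definition T_C :: "(nat \<Rightarrow> real) \<Rightarrow> nat set \<Rightarrow> real" where
  "T_C T S = (\<Sum>j\<in>S. T j)"

definition normal :: "nat \<Rightarrow> (nat set \<Rightarrow> real) \<Rightarrow> (nat \<Rightarrow> real) \<Rightarrow> (nat \<Rightarrow> real) \<Rightarrow> bool" where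
  "normal n mu t T \<longleftrightarrow>
     (\<forall>S\<in>nonempty_subsets n. t_C t S \<le> M_C n mu S \<and> m_C n mu S \<le> T_C T S)"

end

theory Submission
  imports Defs
begin

lemma finite_NS: "finite (nonempty_subsets n)"
  by (rule finite_subset[of _ "Pow {1..n}"]) (auto simp: nonempty_subsets_def)

lemma sum3:
  fixes f :: "'a \<Rightarrow> 'b::comm_monoid_add"
  assumes "finite F" "a \<in> F" "b \<in> F" "c \<in> F" "a \<noteq> b" "a \<noteq> c" "b \<noteq> c"
  shows "sum f F = f a + f b + f c + sum f (F - {a,b,c})"
proof -
  have "sum f F = sum f (F - {a,b,c}) + sum f {a,b,c}"
    by (rule sum.subset_diff) (use assms in auto)
  then show ?thesis using assms by (simp add: ac_simps)
qed

lemma sum_strict_extra: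
  fixes g h :: "'a \<Rightarrow> real"
  assumes "finite F" "R \<in> F" "\<And>x. x \<in> F \<Longrightarrow> g x \<le> h x" "g R + c \<le> h R"
  shows "sum g F + c \<le> sum h F"
proof -
  have "sum g (F - {R}) \<le> sum h (F - {R})" by (rule sum_mono) (use assms in auto)
  moreover have "sum g F = g R + sum g (F - {R})" "sum h F = h R + sum h (F - {R})"
    using assms by (auto intro: sum.remove)
  ultimately show ?thesis using assms(4) by linarith
qed

lemma m_alt: "m_C n mu S = (\<Sum>Q\<in>nonempty_subsets n. if Q \<subseteq> S then mu Q else 0)"
  unfolding m_C_def by (rule sum.inter_filter[OF finite_NS])

lemma M_alt: "M_C n mu S = (\<Sum>Q\<in>nonempty_subsets n. if Q \<inter> S \<noteq> {} then mu Q else 0)"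
  unfolding M_C_def by (rule sum.inter_filter[OF finite_NS])

lemma normal_all:
  assumes "normal n mu t T" "S \<subseteq> {1..n}"
  shows "m_C n mu S \<le> T_C T S \<and> t_C t S \<le> M_C n mu S"
proof (cases "S = {}")
  case True
  then show ?thesis by (simp add: m_C_def M_C_def t_C_def T_C_def nonempty_subsets_def)
next
  case False
  then show ?thesis using assms by (auto simp: normal_def nonempty_subsets_def)
qed

lemma m_super:
  assumes nn: "\<forall>Q\<in>nonempty_subsets n. mu Q \<ge> 0" and R: "R \<in> nonempty_subsets n"
    and "R \<subseteq> A \<union> B" "\<not> R \<subseteq> A" "\<not> R \<subseteq> B"
  shows "m_C n mu A + m_C n mu B + mu R \<le> m_C n mu (A \<union> B) + m_C n mu (A \<inter> B)"
proof -
  have "(\<Sum>Q\<in>nonempty_subsets n. (if Q \<subseteq> A then mu Q else 0) + (if Q \<subseteq> B then mu Q else 0)) + mu R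
     \<le> (\<Sum>Q\<in>nonempty_subsets n. (if Q \<subseteq> A \<union> B then mu Q else 0) + (if Q \<subseteq> A \<inter> B then mu Q else 0))"
  proof (rule sum_strict_extra[OF finite_NS R])
    fix x assume "x \<in> nonempty_subsets n"
    hence "mu x \<ge> 0" using nn by blast
    moreover have "x \<subseteq> A \<inter> B \<longleftrightarrow> x \<subseteq> A \<and> x \<subseteq> B" "x \<subseteq> A \<Longrightarrow> x \<subseteq> A \<union> B" "x \<subseteq> B \<Longrightarrow> x \<subseteq> A \<union> B" by blast+
    ultimately show "(if x \<subseteq> A then mu x else 0) + (if x \<subseteq> B then mu x else 0)
      \<le> (if x \<subseteq> A \<union> B then mu x else 0) + (if x \<subseteq> A \<inter> B then mu x else 0)"
      by (cases "x \<subseteq> A"; cases "x \<subseteq> B") auto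
  next
    show "(if R \<subseteq> A then mu R else 0) + (if R \<subseteq> B then mu R else 0) + mu R
      \<le> (if R \<subseteq> A \<union> B then mu R else 0) + (if R \<subseteq> A \<inter> B then mu R else 0)"
      using assms(3-5) by simp
  qed
  then show ?thesis by (simp add: m_alt sum.distrib)
qed

lemma M_sub:
  assumes nn: "\<forall>Q\<in>nonempty_subsets n. mu Q \<ge> 0" and R: "R \<in> nonempty_subsets n"
    and "R \<inter> A \<noteq> {}" "R \<inter> B \<noteq> {}" "R \<inter> A \<inter> B = {}"
  shows "M_C n mu (A \<union> B) + M_C n mu (A \<inter> B) + mu R \<le> M_C n mu A + M_C n mu B"
proof -
  have "(\<Sum>Q\<in>nonempty_subsets n. (if Q \<inter> (A \<union> B) \<noteq> {} then mu Q else 0) + (if Q \<inter> (A \<inter> B) \<noteq> {} then mu Q else 0)) + mu R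
     \<le> (\<Sum>Q\<in>nonempty_subsets n. (if Q \<inter> A \<noteq> {} then mu Q else 0) + (if Q \<inter> B \<noteq> {} then mu Q else 0))"
  proof (rule sum_strict_extra[OF finite_NS R])
    fix x assume "x \<in> nonempty_subsets n"
    hence "mu x \<ge> 0" using nn by blast
    moreover have "x \<inter> (A \<union> B) \<noteq> {} \<longleftrightarrow> x \<inter> A \<noteq> {} \<or> x \<inter> B \<noteq> {}" by blast
    moreover have "x \<inter> (A \<inter> B) \<noteq> {} \<Longrightarrow> x \<inter> A \<noteq> {} \<and> x \<inter> B \<noteq> {}" by blast
    ultimately show "(if x \<inter> (A \<union> B) \<noteq> {} then mu x else 0) + (if x \<inter> (A \<inter> B) \<noteq> {} then mu x else 0)
      \<le> (if x \<inter> A \<noteq> {} then mu x else 0) + (if x \<inter> B \<noteq> {} then mu x else 0)"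
      by (cases "x \<inter> A \<noteq> {}"; cases "x \<inter> B \<noteq> {}") auto
  next
    have "R \<inter> (A \<inter> B) = {}" using assms(5) by blast
    moreover have "R \<inter> (A \<union> B) \<noteq> {}" using assms(3) by blast
    ultimately show "(if R \<inter> (A \<union> B) \<noteq> {} then mu R else 0) + (if R \<inter> (A \<inter> B) \<noteq> {} then mu R else 0) + mu R
      \<le> (if R \<inter> A \<noteq> {} then mu R else 0) + (if R \<inter> B \<noteq> {} then mu R else 0)"
      using assms(3,4) by simp
  qed
  then show ?thesis by (simp add: M_alt sum.distrib)
qed

lemma Mm_mix:
  assumes nn: "\<forall>Q\<in>nonempty_subsets n. mu Q \<ge> 0" and R: "R \<in> nonempty_subsets n"
    and "R \<inter> A \<noteq> {}" "\<not> R \<subseteq> B" "R \<inter> (A - B) = {}"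
  shows "M_C n mu (A - B) + m_C n mu B + mu R \<le> M_C n mu A + m_C n mu (B - A)"
proof -
  have "(\<Sum>Q\<in>nonempty_subsets n. (if Q \<inter> (A - B) \<noteq> {} then mu Q else 0) + (if Q \<subseteq> B then mu Q else 0)) + mu R
     \<le> (\<Sum>Q\<in>nonempty_subsets n. (if Q \<inter> A \<noteq> {} then mu Q else 0) + (if Q \<subseteq> B - A then mu Q else 0))"
  proof (rule sum_strict_extra[OF finite_NS R])
    fix x assume x: "x \<in> nonempty_subsets n"
    hence "mu x \<ge> 0" using nn by blast
    moreover have "x \<noteq> {}" using x by (simp add: nonempty_subsets_def)
    moreover have "x \<inter> (A - B) \<noteq> {} \<Longrightarrow> x \<inter> A \<noteq> {}" by blast
    moreover have "x \<inter> (A - B) \<noteq> {} \<Longrightarrow> \<not> x \<subseteq> B" by blast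
    moreover have "x \<noteq> {} \<Longrightarrow> x \<subseteq> B \<Longrightarrow> x \<inter> A = {} \<Longrightarrow> x \<subseteq> B - A" by blast
    ultimately show "(if x \<inter> (A - B) \<noteq> {} then mu x else 0) + (if x \<subseteq> B then mu x else 0)
      \<le> (if x \<inter> A \<noteq> {} then mu x else 0) + (if x \<subseteq> B - A then mu x else 0)"
      by (cases "x \<inter> A \<noteq> {}"; cases "x \<subseteq> B"; cases "x \<inter> (A - B) \<noteq> {}"; cases "x \<subseteq> B - A") auto
  next
    have "\<not> R \<subseteq> B - A" using assms(4) by blast
    then show "(if R \<inter> (A - B) \<noteq> {} then mu R else 0) + (if R \<subseteq> B then mu R else 0) + mu R
      \<le> (if R \<inter> A \<noteq> {} then mu R else 0) + (if R \<subseteq> B - A then mu R else 0)"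
      using assms(3-5) by simp
  qed
  then show ?thesis by (simp add: m_alt M_alt sum.distrib)
qed

lemma sum_change:
  fixes g g' :: "'a \<Rightarrow> real"
  assumes "finite F" "a \<in> F" "b \<in> F" "c \<in> F" "a \<noteq> b" "a \<noteq> c" "b \<noteq> c"
    and "\<And>x. x \<in> F - {a,b,c} \<Longrightarrow> g' x = g x"
  shows "sum g' F = sum g F + (g' a - g a) + (g' b - g b) + (g' c - g c)"
proof -
  have "sum g' (F - {a,b,c}) = sum g (F - {a,b,c})" using assms(8) by (rule sum.cong[OF refl])
  then show ?thesis using sum3[OF assms(1-7), of g] sum3[OF assms(1-7), of g'] by linarith
qed

lemma ineq_mm:
  assumes nn: "\<forall>Q\<in>nonempty_subsets n. mu Q \<ge> 0" and nor: "normal n mu t T"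
    and AB: "A \<subseteq> {1..n}" "B \<subseteq> {1..n}" and R: "R \<in> nonempty_subsets n"
    and "R \<subseteq> A \<union> B" "\<not> R \<subseteq> A" "\<not> R \<subseteq> B"
  shows "m_C n mu A + m_C n mu B + mu R \<le> T_C T A + T_C T B"
proof -
  have "finite A" "finite B" using AB finite_subset by auto
  then have "T_C T (A \<union> B) + T_C T (A \<inter> B) = T_C T A + T_C T B"
    unfolding T_C_def by (rule sum.union_inter)
  moreover have "m_C n mu (A \<union> B) \<le> T_C T (A \<union> B)" "m_C n mu (A \<inter> B) \<le> T_C T (A \<inter> B)"
    using normal_all[OF nor, of "A \<union> B"] normal_all[OF nor, of "A \<inter> B"] AB by blast+
  ultimately show ?thesis using m_super[OF nn R assms(6-8)] by linarith
qed

lemma ineq_MM: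
  assumes nn: "\<forall>Q\<in>nonempty_subsets n. mu Q \<ge> 0" and nor: "normal n mu t T"
    and AB: "A \<subseteq> {1..n}" "B \<subseteq> {1..n}" and R: "R \<in> nonempty_subsets n"
    and "R \<inter> A \<noteq> {}" "R \<inter> B \<noteq> {}" "R \<inter> A \<inter> B = {}"
  shows "t_C t A + t_C t B + mu R \<le> M_C n mu A + M_C n mu B"
proof -
  have "finite A" "finite B" using AB finite_subset by auto
  then have "t_C t (A \<union> B) + t_C t (A \<inter> B) = t_C t A + t_C t B"
    unfolding t_C_def by (rule sum.union_inter)
  moreover have "t_C t (A \<union> B) \<le> M_C n mu (A \<union> B)" "t_C t (A \<inter> B) \<le> M_C n mu (A \<inter> B)"
    using normal_all[OF nor, of "A \<union> B"] normal_all[OF nor, of "A \<inter> B"] AB by blast+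
  ultimately show ?thesis using M_sub[OF nn R assms(6-8)] by linarith
qed

lemma ineq_Mm:
  assumes nn: "\<forall>Q\<in>nonempty_subsets n. mu Q \<ge> 0" and nor: "normal n mu t T"
    and tT: "\<forall>i\<in>{1..n}. t i \<le> T i"
    and AB: "A \<subseteq> {1..n}" "B \<subseteq> {1..n}" and R: "R \<in> nonempty_subsets n"
    and "R \<inter> A \<noteq> {}" "\<not> R \<subseteq> B" "R \<inter> (A - B) = {}"
  shows "mu R + t_C t A + m_C n mu B \<le> M_C n mu A + T_C T B"
proof -
  have "finite A" "finite B" using AB finite_subset by auto
  have 1: "t_C t A = t_C t (A \<inter> B) + t_C t (A - B)" unfolding t_C_def
    using \<open>finite A\<close> by (rule sum.Int_Diff)
  have 2: "T_C T B = T_C T (A \<inter> B) + T_C T (B - A)" unfolding T_C_def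
    using sum.Int_Diff[OF \<open>finite B\<close>, of T A] by (simp add: Int_commute)
  have 3: "t_C t (A \<inter> B) \<le> T_C T (A \<inter> B)" unfolding t_C_def T_C_def
    using tT AB by (intro sum_mono) auto
  have "t_C t (A - B) \<le> M_C n mu (A - B)" "m_C n mu (B - A) \<le> T_C T (B - A)"
    using normal_all[OF nor, of "A - B"] normal_all[OF nor, of "B - A"] AB by blast+
  then show ?thesis using 1 2 3 Mm_mix[OF nn R assms(7-9)] by linarith
qed


lemma R_facts:
  assumes R: "R \<in> nonempty_subsets n" and j: "j \<in> R" and c2: "card R \<ge> 2"
  shows "R - {j} \<in> nonempty_subsets n" "{j} \<in> nonempty_subsets n" "R \<noteq> R - {j}"
    "R \<noteq> {j}" "R - {j} \<noteq> {j}" "R = insert j (R - {j})" "j \<notin> R - {j}"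
proof -
  have fin: "finite R" using c2 card.infinite by fastforce
  have "R - {j} \<noteq> {}"
  proof
    assume "R - {j} = {}"
    then have "R = {j}" using j by blast
    then show False using c2 by simp
  qed
  then show "R - {j} \<in> nonempty_subsets n" using R by (auto simp: nonempty_subsets_def)
  show "{j} \<in> nonempty_subsets n" using R j by (auto simp: nonempty_subsets_def)
  show "R \<noteq> R - {j}" using j by blast
  show "R \<noteq> {j}" using c2 by auto
  show "R - {j} \<noteq> {j}" by blast
  show "R = insert j (R - {j})" using j by blast
  show "j \<notin> R - {j}" by blast
qed

lemma split_step:
  assumes dist: "is_dist_constraint n mu t T" and nor: "normal n mu t T"
    and R: "R \<in> nonempty_subsets n" and j: "j \<in> R" and c2: "card R \<ge> 2"
  shows "\<exists>l. 0 \<le> l \<and> l \<le> mu R \<and>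
     normal n (mu(R := 0, R - {j} := mu (R - {j}) + l, {j} := mu {j} + (mu R - l))) t T"
proof -
  define R' where "R' = R - {j}"
  note RF = R_facts[OF R j c2, folded R'_def]
  have nn: "\<forall>Q\<in>nonempty_subsets n. mu Q \<ge> 0" and tT: "\<forall>i\<in>{1..n}. t i \<le> T i"
    using dist by (auto simp: is_dist_constraint_def)
  have NSsub: "\<And>S. S \<in> nonempty_subsets n \<Longrightarrow> S \<subseteq> {1..n}" by (simp add: nonempty_subsets_def)
  have nor1: "\<And>S. S \<in> nonempty_subsets n \<Longrightarrow> m_C n mu S \<le> T_C T S"
   and nor2: "\<And>S. S \<in> nonempty_subsets n \<Longrightarrow> t_C t S \<le> M_C n mu S"
    using nor by (auto simp: normal_def)
  have muR: "mu R \<ge> 0" using nn R by blast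
  define L1 where "L1 = (\<lambda>S. m_C n mu S + mu R - T_C T S) ` {S \<in> nonempty_subsets n. j \<in> S \<and> \<not> R' \<subseteq> S}"
  define L2 where "L2 = (\<lambda>S. mu R - M_C n mu S + t_C t S) ` {S \<in> nonempty_subsets n. j \<notin> S \<and> R' \<inter> S \<noteq> {}}"
  define La where "La = insert 0 (L1 \<union> L2)"
  have finLa: "finite La" unfolding La_def L1_def L2_def
    by (intro finite_insert[THEN iffD2] finite_UnI finite_imageI; rule finite_subset[OF _ finite_NS]; blast)
  define l where "l = Max La"
  have lin: "l \<in> La" unfolding l_def using finLa by (intro Max_in) (auto simp: La_def)
  have lge: "\<And>a. a \<in> La \<Longrightarrow> a \<le> l" unfolding l_def using finLa by (intro Max_ge)
  have l0: "0 \<le> l" using lge La_def by auto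
  have U0: "\<And>a. a \<in> La \<Longrightarrow> a \<le> mu R"
    unfolding La_def L1_def L2_def using muR nor1 nor2 by fastforce
  have U1: "\<And>a S. a \<in> La \<Longrightarrow> S \<in> nonempty_subsets n \<Longrightarrow> j \<notin> S \<Longrightarrow> R' \<subseteq> S \<Longrightarrow> a \<le> T_C T S - m_C n mu S"
  proof -
    fix a S assume a: "a \<in> La" and S: "S \<in> nonempty_subsets n" "j \<notin> S" "R' \<subseteq> S"
    show "a \<le> T_C T S - m_C n mu S"
    proof -
      consider "a = 0" | "a \<in> L1" | "a \<in> L2" using a La_def by blast
      then show ?thesis
      proof cases
        case 1 then show ?thesis using nor1[OF S(1)] by simp
      next
        case 2
        then obtain S1 where S1: "S1 \<in> nonempty_subsets n" "j \<in> S1" "\<not> R' \<subseteq> S1"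
          and a1: "a = m_C n mu S1 + mu R - T_C T S1" unfolding L1_def by blast
        have "R \<subseteq> S1 \<union> S" "\<not> R \<subseteq> S1" "\<not> R \<subseteq> S" using RF(6) S S1 by blast+
        from ineq_mm[OF nn nor NSsub[OF S1(1)] NSsub[OF S(1)] R this] show ?thesis using a1 by linarith
      next
        case 3
        then obtain S1 where S1: "S1 \<in> nonempty_subsets n" "j \<notin> S1" "R' \<inter> S1 \<noteq> {}"
          and a1: "a = mu R - M_C n mu S1 + t_C t S1" unfolding L2_def by blast
        have "R \<inter> S1 \<noteq> {}" "\<not> R \<subseteq> S" "R \<inter> (S1 - S) = {}" using RF(6) S S1 by blast+
        from ineq_Mm[OF nn nor tT NSsub[OF S1(1)] NSsub[OF S(1)] R this] show ?thesis using a1 by linarith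
      qed
    qed
  qed
  have U2: "\<And>a S. a \<in> La \<Longrightarrow> S \<in> nonempty_subsets n \<Longrightarrow> j \<in> S \<Longrightarrow> R' \<inter> S = {} \<Longrightarrow> a \<le> M_C n mu S - t_C t S"
  proof -
    fix a S assume a: "a \<in> La" and S: "S \<in> nonempty_subsets n" "j \<in> S" "R' \<inter> S = {}"
    show "a \<le> M_C n mu S - t_C t S"
    proof -
      consider "a = 0" | "a \<in> L1" | "a \<in> L2" using a La_def by blast
      then show ?thesis
      proof cases
        case 1 then show ?thesis using nor2[OF S(1)] by simp
      next
        case 2
        then obtain S1 where S1: "S1 \<in> nonempty_subsets n" "j \<in> S1" "\<not> R' \<subseteq> S1"
          and a1: "a = m_C n mu S1 + mu R - T_C T S1" unfolding L1_def by blast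
        have "R \<inter> S \<noteq> {}" "\<not> R \<subseteq> S1" "R \<inter> (S - S1) = {}" using RF(6) S S1 by blast+
        from ineq_Mm[OF nn nor tT NSsub[OF S(1)] NSsub[OF S1(1)] R this] show ?thesis using a1 by linarith
      next
        case 3
        then obtain S1 where S1: "S1 \<in> nonempty_subsets n" "j \<notin> S1" "R' \<inter> S1 \<noteq> {}"
          and a1: "a = mu R - M_C n mu S1 + t_C t S1" unfolding L2_def by blast
        have "R \<inter> S1 \<noteq> {}" "R \<inter> S \<noteq> {}" "R \<inter> S1 \<inter> S = {}" using RF(6) S S1 by blast+
        from ineq_MM[OF nn nor NSsub[OF S1(1)] NSsub[OF S(1)] R this] show ?thesis using a1 by linarith
      qed
    qed
  qed
  have lR: "l \<le> mu R" using U0[OF lin] .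
  define mu' where "mu' = mu(R := 0, R' := mu R' + l, {j} := mu {j} + (mu R - l))"
  have v: "mu' R = 0" "mu' R' = mu R' + l" "mu' {j} = mu {j} + (mu R - l)"
    "\<And>x. x \<notin> {R, R', {j}} \<Longrightarrow> mu' x = mu x"
    unfolding mu'_def using RF by auto
  have mS: "m_C n mu' S = m_C n mu S + (if R \<subseteq> S then - mu R else 0) + (if R' \<subseteq> S then l else 0)
        + (if {j} \<subseteq> S then mu R - l else 0)" for S
  proof -
    have "(\<Sum>Q\<in>nonempty_subsets n. if Q \<subseteq> S then mu' Q else 0) = (\<Sum>Q\<in>nonempty_subsets n. if Q \<subseteq> S then mu Q else 0)
      + ((if R \<subseteq> S then mu' R else 0) - (if R \<subseteq> S then mu R else 0))
      + ((if R' \<subseteq> S then mu' R' else 0) - (if R' \<subseteq> S then mu R' else 0))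
      + ((if {j} \<subseteq> S then mu' {j} else 0) - (if {j} \<subseteq> S then mu {j} else 0))"
      by (rule sum_change[OF finite_NS R RF(1) RF(2) RF(3) RF(4) RF(5)]) (use v in auto)
    then show ?thesis unfolding m_alt using v(1-3) by (simp split: if_split)
  qed
  have MS: "M_C n mu' S = M_C n mu S + (if R \<inter> S \<noteq> {} then - mu R else 0) + (if R' \<inter> S \<noteq> {} then l else 0)
        + (if {j} \<inter> S \<noteq> {} then mu R - l else 0)" for S
  proof -
    have "(\<Sum>Q\<in>nonempty_subsets n. if Q \<inter> S \<noteq> {} then mu' Q else 0) = (\<Sum>Q\<in>nonempty_subsets n. if Q \<inter> S \<noteq> {} then mu Q else 0)
      + ((if R \<inter> S \<noteq> {} then mu' R else 0) - (if R \<inter> S \<noteq> {} then mu R else 0))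
      + ((if R' \<inter> S \<noteq> {} then mu' R' else 0) - (if R' \<inter> S \<noteq> {} then mu R' else 0))
      + ((if {j} \<inter> S \<noteq> {} then mu' {j} else 0) - (if {j} \<inter> S \<noteq> {} then mu {j} else 0))"
      by (rule sum_change[OF finite_NS R RF(1) RF(2) RF(3) RF(4) RF(5)]) (use v in auto)
    then show ?thesis unfolding M_alt using v(1-3) by (simp split: if_split)
  qed
  have "normal n mu' t T"
    unfolding normal_def
  proof
    fix S assume S: "S \<in> nonempty_subsets n"
    have e1: "R \<subseteq> S \<longleftrightarrow> j \<in> S \<and> R' \<subseteq> S" using RF(6) by blast
    have e2: "R \<inter> S \<noteq> {} \<longleftrightarrow> j \<in> S \<or> R' \<inter> S \<noteq> {}" using RF(6) by blast
    have e3: "{j} \<subseteq> S \<longleftrightarrow> j \<in> S" "{j} \<inter> S \<noteq> {} \<longleftrightarrow> j \<in> S" by auto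
    have A1: "j \<in> S \<Longrightarrow> \<not> R' \<subseteq> S \<Longrightarrow> m_C n mu S + mu R - T_C T S \<le> l"
      using S by (intro lge) (auto simp: La_def L1_def)
    have A2: "j \<notin> S \<Longrightarrow> R' \<inter> S \<noteq> {} \<Longrightarrow> mu R - M_C n mu S + t_C t S \<le> l"
      using S by (intro lge) (auto simp: La_def L2_def)
    have B1: "j \<notin> S \<Longrightarrow> R' \<subseteq> S \<Longrightarrow> l \<le> T_C T S - m_C n mu S" using U1[OF lin S] by blast
    have B2: "j \<in> S \<Longrightarrow> R' \<inter> S = {} \<Longrightarrow> l \<le> M_C n mu S - t_C t S" using U2[OF lin S] by blast
    show "t_C t S \<le> M_C n mu' S \<and> m_C n mu' S \<le> T_C T S"
      unfolding mS MS e1 e2 e3 using nor1[OF S] nor2[OF S] A1 A2 B1 B2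
      by (cases "j \<in> S"; cases "R' \<subseteq> S"; cases "R' \<inter> S = {}") auto
  qed
  then show ?thesis using l0 lR unfolding mu'_def R'_def by blast
qed


lemma merge:
  assumes dist: "is_dist_constraint n mu t T"
    and R: "R \<in> nonempty_subsets n" and j: "j \<in> R" and c2: "card R \<ge> 2"
    and l0: "0 \<le> l" and lR: "l \<le> mu R"
    and sat: "satisfiable n (mu(R := 0, R - {j} := mu (R - {j}) + l, {j} := mu {j} + (mu R - l))) t T"
  shows "satisfiable n mu t T"
proof -
  define R' where "R' = R - {j}"
  define J where "J = {j}"
  note RF = R_facts[OF R j c2, folded R'_def J_def]
  define mu' where "mu' = mu(R := 0, R' := mu R' + l, J := mu J + (mu R - l))"
  have v: "mu' R = 0" "mu' R' = mu R' + l" "mu' J = mu J + (mu R - l)"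
    "\<And>x. x \<notin> {R, R', J} \<Longrightarrow> mu' x = mu x"
    unfolding mu'_def using RF by auto
  have nn: "\<forall>Q\<in>nonempty_subsets n. mu Q \<ge> 0"
    using dist by (auto simp: is_dist_constraint_def)
  have muR': "mu R' \<ge> 0" "mu J \<ge> 0" using nn RF by auto
  obtain x' where x1: "\<forall>Q\<in>nonempty_subsets n. \<forall>i\<in>{1..n}. x' Q i \<ge> 0"
    and x2: "\<forall>Q\<in>nonempty_subsets n. \<forall>i\<in>{1..n}. i \<notin> Q \<longrightarrow> x' Q i = 0"
    and x3: "\<forall>Q\<in>nonempty_subsets n. (\<Sum>i\<in>{1..n}. x' Q i) = mu' Q"
    and x4: "\<forall>i\<in>{1..n}. t i \<le> (\<Sum>Q\<in>nonempty_subsets n. x' Q i) \<and> (\<Sum>Q\<in>nonempty_subsets n. x' Q i) \<le> T i"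
    using sat unfolding satisfiable_def mu'_def R'_def J_def by blast
  have xR0: "x' R i = 0" if i: "i \<in> {1..n}" for i
  proof -
    have "(\<Sum>i\<in>{1..n}. x' R i) = 0" using x3 R v(1) by simp
    then have "\<forall>i\<in>{1..n}. x' R i = 0" using x1 R by (subst sum_nonneg_eq_0_iff[symmetric]) auto
    then show ?thesis using i by blast
  qed
  define a where "a = mu R' + l"
  define b where "b = mu J + (mu R - l)"
  define c1 where "c1 = (if a = 0 then 0 else l / a)"
  define c2 where "c2 = (if b = 0 then 0 else (mu R - l) / b)"
  have a0: "a \<ge> l" "b \<ge> mu R - l" using muR' unfolding a_def b_def by auto
  have c1a: "c1 * a = l" using a0 l0 unfolding c1_def by auto
  have c2b: "c2 * b = mu R - l" using a0 lR unfolding c2_def by auto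
  have c1r: "0 \<le> c1" "c1 \<le> 1" using a0 l0 unfolding c1_def by (auto simp: divide_le_eq_1)
  have c2r: "0 \<le> c2" "c2 \<le> 1" using a0 lR unfolding c2_def by (auto simp: divide_le_eq_1)
  define x where "x = (\<lambda>Q i. if Q = R then c1 * x' R' i + c2 * x' J i
     else if Q = R' then (1 - c1) * x' R' i else if Q = J then (1 - c2) * x' J i else x' Q i)"
  have xR: "x R i = c1 * x' R' i + c2 * x' J i" "x R' i = (1 - c1) * x' R' i" "x J i = (1 - c2) * x' J i" for i
    unfolding x_def using RF by auto
  have xo: "Q \<notin> {R, R', J} \<Longrightarrow> x Q i = x' Q i" for Q i unfolding x_def by auto
  have P1: "\<forall>Q\<in>nonempty_subsets n. \<forall>i\<in>{1..n}. x Q i \<ge> 0"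
  proof (intro ballI)
    fix Q i assume Q: "Q \<in> nonempty_subsets n" and i: "i \<in> {1..n}"
    have "x' R' i \<ge> 0" "x' J i \<ge> 0" "x' Q i \<ge> 0" using x1 RF Q i by auto
    then show "x Q i \<ge> 0" using c1r c2r
      by (cases "Q = R"; cases "Q = R'"; cases "Q = J") (auto simp: xR xo)
  qed
  have P2: "\<forall>Q\<in>nonempty_subsets n. \<forall>i\<in>{1..n}. i \<notin> Q \<longrightarrow> x Q i = 0"
  proof (intro ballI impI)
    fix Q i assume Q: "Q \<in> nonempty_subsets n" and i: "i \<in> {1..n}" and iQ: "i \<notin> Q"
    show "x Q i = 0"
    proof (cases "Q = R")
      case True
      then have "i \<notin> R'" "i \<notin> J" using iQ RF(6) unfolding J_def by auto
      then have "x' R' i = 0" "x' J i = 0" using x2 RF i by auto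
      then show ?thesis using True xR by simp
    next
      case False
      have "x' Q i = 0" using x2 Q i iQ by auto
      then show ?thesis using False xR xo by (cases "Q = R'"; cases "Q = J") auto
    qed
  qed
  have P3: "\<forall>Q\<in>nonempty_subsets n. (\<Sum>i\<in>{1..n}. x Q i) = mu Q"
  proof
    fix Q assume Q: "Q \<in> nonempty_subsets n"
    have sR': "(\<Sum>i\<in>{1..n}. x' R' i) = a" using x3 RF v unfolding a_def by auto
    have sJ: "(\<Sum>i\<in>{1..n}. x' J i) = b" using x3 RF v unfolding b_def by auto
    consider "Q = R" | "Q = R'" | "Q = J" | "Q \<notin> {R, R', J}" by blast
    then show "(\<Sum>i\<in>{1..n}. x Q i) = mu Q"
    proof cases
      case 1
      have "(\<Sum>i\<in>{1..n}. x Q i) = c1 * (\<Sum>i\<in>{1..n}. x' R' i) + c2 * (\<Sum>i\<in>{1..n}. x' J i)"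
        unfolding 1 xR by (simp add: sum.distrib sum_distrib_left)
      then show ?thesis using sR' sJ c1a c2b 1 by simp
    next
      case 2
      have "(\<Sum>i\<in>{1..n}. x Q i) = (1 - c1) * (\<Sum>i\<in>{1..n}. x' R' i)"
        unfolding 2 xR by (simp add: sum_distrib_left)
      also have "\<dots> = a - c1 * a" using sR' by (simp add: algebra_simps)
      finally show ?thesis using c1a 2 unfolding a_def by simp
    next
      case 3
      have "(\<Sum>i\<in>{1..n}. x Q i) = (1 - c2) * (\<Sum>i\<in>{1..n}. x' J i)"
        unfolding 3 xR by (simp add: sum_distrib_left)
      also have "\<dots> = b - c2 * b" using sJ by (simp add: algebra_simps)
      finally show ?thesis using c2b 3 unfolding b_def by simp
    next
      case 4
      then show ?thesis using xo[OF 4] x3 Q v(4)[OF 4] by simp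
    qed
  qed
  have P4: "\<forall>i\<in>{1..n}. (\<Sum>Q\<in>nonempty_subsets n. x Q i) = (\<Sum>Q\<in>nonempty_subsets n. x' Q i)"
  proof
    fix i assume i: "i \<in> {1..n}"
    have "(\<Sum>Q\<in>nonempty_subsets n. x Q i) = (\<Sum>Q\<in>nonempty_subsets n. x' Q i)
      + (x R i - x' R i) + (x R' i - x' R' i) + (x J i - x' J i)"
      by (rule sum_change[OF finite_NS R RF(1) RF(2) RF(3) RF(4) RF(5)]) (use xo in auto)
    then show "(\<Sum>Q\<in>nonempty_subsets n. x Q i) = (\<Sum>Q\<in>nonempty_subsets n. x' Q i)"
      using xR0[OF i] by (simp add: xR algebra_simps)
  qed
  show ?thesis unfolding satisfiable_def
    using P1 P2 P3 P4 x4 by (intro exI[of _ x]) auto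
qed


definition meas :: "nat \<Rightarrow> (nat set \<Rightarrow> real) \<Rightarrow> nat" where
  "meas n mu = (\<Sum>Q\<in>nonempty_subsets n. if mu Q \<noteq> 0 \<and> 2 \<le> card Q then 3 ^ card Q else 0)"

lemma meas_decr:
  assumes R: "R \<in> nonempty_subsets n" and j: "j \<in> R" and c2: "card R \<ge> 2" and mR: "mu R \<noteq> 0"
  shows "meas n (mu(R := 0, R - {j} := v1, {j} := v2)) < meas n mu"
proof -
  define R' where "R' = R - {j}"
  define J where "J = {j}"
  note RF = R_facts[OF R j c2, folded R'_def J_def]
  define mu' where "mu' = mu(R := 0, R' := v1, J := v2)"
  have v: "mu' R = 0" "\<And>x. x \<notin> {R, R', J} \<Longrightarrow> mu' x = mu x"
    unfolding mu'_def using RF by auto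
  define g where "g = (\<lambda>(mu::nat set \<Rightarrow> real) (Q::nat set). if mu Q \<noteq> 0 \<and> 2 \<le> card Q then 3 ^ card Q else (0::nat))"
  have fin: "finite R" using c2 card.infinite by fastforce
  have cR': "card R' = card R - 1" unfolding R'_def using fin j by simp
  have e: "meas n m = g m R + g m R' + g m J + (\<Sum>Q\<in>nonempty_subsets n - {R, R', J}. g m Q)" for m
    unfolding meas_def g_def by (rule sum3[OF finite_NS R RF(1) RF(2) RF(3) RF(4) RF(5)])
  have rest: "(\<Sum>Q\<in>nonempty_subsets n - {R, R', J}. g mu' Q) = (\<Sum>Q\<in>nonempty_subsets n - {R, R', J}. g mu Q)"
    using v(2) unfolding g_def by (intro sum.cong) auto
  have "g mu' R = 0" using v(1) unfolding g_def by simp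
  moreover have "g mu' J = 0" unfolding g_def J_def by simp
  moreover have "g mu' R' \<le> 3 ^ (card R - 1)" unfolding g_def cR' by simp
  moreover have "g mu R = 3 ^ card R" using mR c2 unfolding g_def by simp
  moreover have "(3::nat) ^ (card R - 1) < 3 ^ card R" using c2 by (intro power_strict_increasing) auto
  ultimately have "meas n mu' < meas n mu" unfolding e rest by linarith
  then show ?thesis unfolding mu'_def R'_def J_def .
qed

lemma card_ge2:
  assumes "finite Q" "i \<in> Q" "Q \<noteq> {i}" shows "2 \<le> card Q"
proof -
  obtain k where "k \<in> Q" "k \<noteq> i" using assms by blast
  then have "card {i, k} \<le> card Q" using assms by (intro card_mono) auto
  then show ?thesis using \<open>k \<noteq> i\<close> by simp
qed

lemma base:
  assumes dist: "is_dist_constraint n mu t T" and nor: "normal n mu t T"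
    and small: "\<forall>Q\<in>nonempty_subsets n. 2 \<le> card Q \<longrightarrow> mu Q = 0"
  shows "satisfiable n mu t T"
proof -
  have nn: "\<forall>Q\<in>nonempty_subsets n. mu Q \<ge> 0"
    using dist by (auto simp: is_dist_constraint_def)
  define x where "x = (\<lambda>Q i. if Q = {i} then mu Q else (0::real))"
  have fQ: "finite Q" if "Q \<in> nonempty_subsets n" for Q
    using that finite_subset by (auto simp: nonempty_subsets_def)
  have P3: "\<forall>Q\<in>nonempty_subsets n. (\<Sum>i\<in>{1..n}. x Q i) = mu Q"
  proof
    fix Q assume Q: "Q \<in> nonempty_subsets n"
    show "(\<Sum>i\<in>{1..n}. x Q i) = mu Q"
    proof (cases "\<exists>k. Q = {k}")
      case True
      then obtain k where k: "Q = {k}" by blast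
      have kn: "k \<in> {1..n}" using Q k by (auto simp: nonempty_subsets_def)
      have "(\<Sum>i\<in>{1..n}. x Q i) = (\<Sum>i\<in>{1..n}. if i = k then mu Q else 0)"
        unfolding x_def k by (intro sum.cong) auto
      then show ?thesis using kn by simp
    next
      case False
      obtain k where "k \<in> Q" using Q by (auto simp: nonempty_subsets_def)
      then have "2 \<le> card Q" using False card_ge2[OF fQ[OF Q]] by blast
      then show ?thesis using small Q False unfolding x_def by auto
    qed
  qed
  have P4: "t i \<le> (\<Sum>Q\<in>nonempty_subsets n. x Q i) \<and> (\<Sum>Q\<in>nonempty_subsets n. x Q i) \<le> T i"
    if i: "i \<in> {1..n}" for i
  proof -
    have iN: "{i} \<in> nonempty_subsets n" using i by (auto simp: nonempty_subsets_def)
    have s: "(\<Sum>Q\<in>nonempty_subsets n. x Q i) = mu {i}"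
      unfolding x_def using iN by (simp add: finite_NS)
    have "m_C n mu {i} = (\<Sum>Q\<in>nonempty_subsets n. if Q = {i} then mu Q else 0)"
      unfolding m_alt
    proof (intro sum.cong refl)
      fix Q assume Q: "Q \<in> nonempty_subsets n"
      then have "Q \<noteq> {}" by (simp add: nonempty_subsets_def)
      then have "Q \<subseteq> {i} \<longleftrightarrow> Q = {i}" by (simp add: subset_singleton_iff)
      then show "(if Q \<subseteq> {i} then mu Q else 0) = (if Q = {i} then mu Q else 0)" by simp
    qed
    then have m: "m_C n mu {i} = mu {i}" using iN by (simp add: finite_NS)
    have "M_C n mu {i} = (\<Sum>Q\<in>nonempty_subsets n. if Q = {i} then mu Q else 0)"
      unfolding M_alt
    proof (intro sum.cong refl)
      fix Q assume Q: "Q \<in> nonempty_subsets n"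
      show "(if Q \<inter> {i} \<noteq> {} then mu Q else 0) = (if Q = {i} then mu Q else 0)"
      proof (cases "i \<in> Q \<and> Q \<noteq> {i}")
        case True
        then have "mu Q = 0" using card_ge2[OF fQ[OF Q]] small Q by blast
        then show ?thesis by simp
      next
        case False
        then have "Q \<inter> {i} \<noteq> {} \<longleftrightarrow> Q = {i}" by blast
        then show ?thesis by simp
      qed
    qed
    then have M: "M_C n mu {i} = mu {i}" using iN by (simp add: finite_NS)
    have "t_C t {i} \<le> M_C n mu {i} \<and> m_C n mu {i} \<le> T_C T {i}"
      using nor iN unfolding normal_def by blast
    then show ?thesis using s m M by (simp add: t_C_def T_C_def)
  qed
  have P1: "\<forall>Q\<in>nonempty_subsets n. \<forall>i\<in>{1..n}. x Q i \<ge> 0"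
    using nn unfolding x_def by auto
  have P2: "\<forall>Q\<in>nonempty_subsets n. \<forall>i\<in>{1..n}. i \<notin> Q \<longrightarrow> x Q i = 0"
    unfolding x_def by auto
  show ?thesis unfolding satisfiable_def
    using P1 P2 P3 P4 by blast
qed

lemma main_ind:
  "meas n mu = k \<Longrightarrow> is_dist_constraint n mu t T \<Longrightarrow> normal n mu t T \<Longrightarrow> satisfiable n mu t T"
proof (induction k arbitrary: mu rule: less_induct)
  case (less k)
  show ?case
  proof (cases "\<exists>R\<in>nonempty_subsets n. 2 \<le> card R \<and> mu R \<noteq> 0")
    case False
    then have small: "\<forall>Q\<in>nonempty_subsets n. 2 \<le> card Q \<longrightarrow> mu Q = 0" by blast
    show ?thesis by (rule base[OF less.prems(2,3) small])
  next
    case True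
    then obtain R where R: "R \<in> nonempty_subsets n" and c2: "2 \<le> card R" and mR: "mu R \<noteq> 0" by blast
    then obtain j where j: "j \<in> R" by (auto simp: nonempty_subsets_def)
    obtain l where l: "0 \<le> l" "l \<le> mu R"
      and nor': "normal n (mu(R := 0, R - {j} := mu (R - {j}) + l, {j} := mu {j} + (mu R - l))) t T"
      using split_step[OF less.prems(2,3) R j c2] by blast
    define mu' where "mu' = mu(R := 0, R - {j} := mu (R - {j}) + l, {j} := mu {j} + (mu R - l))"
    note RF = R_facts[OF R j c2]
    have nn: "\<forall>Q\<in>nonempty_subsets n. mu Q \<ge> 0"
      using less.prems(2) by (auto simp: is_dist_constraint_def)
    have "mu (R - {j}) \<ge> 0" "mu {j} \<ge> 0" using nn RF by auto
    then have "\<forall>Q\<in>nonempty_subsets n. mu' Q \<ge> 0" using nn l unfolding mu'_def by auto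
    then have dist': "is_dist_constraint n mu' t T"
      using less.prems(2) by (auto simp: is_dist_constraint_def)
    have "meas n mu' < meas n mu" unfolding mu'_def by (rule meas_decr[where mu=mu, OF R j c2 mR])
    then have lt: "meas n mu' < k" using less.prems(1) by simp
    have nor'': "normal n mu' t T" using nor' unfolding mu'_def .
    have "satisfiable n mu' t T" by (rule less.IH[OF lt refl dist' nor''])
    then have sat: "satisfiable n (mu(R := 0, R - {j} := mu (R - {j}) + l, {j} := mu {j} + (mu R - l))) t T"
      unfolding mu'_def .
    show ?thesis by (rule merge[OF less.prems(2) R j c2 l(1) l(2) sat])
  qed
qed

theorem mainTheorem16:
  fixes n :: nat and mu :: "nat set \<Rightarrow> real" and t T :: "nat \<Rightarrow> real"
  assumes "is_dist_constraint n mu t T"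
    and "normal n mu t T"
  shows "satisfiable n mu t T"
  using main_ind[OF refl assms] .

end
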